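(* Every network architecture $\mathbb{A}$ satisfying the buffer axioms (B1)–(B8) satisfies the channel compliance facts (CC1)–(CC6).
   Context: Let $\mathcal{P}$ be a set of participants and $\mathcal{V}$ a set of message values. Synchronous alphabet $\Gamma=\{p\to q:m\mid p,q\in\mathcal{P},m\in\mathcal{V}\}$. Asynchronous alphabet $\Sigma=\Sigma_!\cup\Sigma_?$, with $\mathsf{snd}(p,q,m)\in\Sigma_!$ ($p$ sends $m$ to $q$) and $\mathsf{rcv}(p,q,m)\in\Sigma_?$ ($q$ receives $m$ from $p$); $\Sigma_p$ = send events with sender $p$ plus receive events with receiver $p$. $w\Downarrow_\Delta$ deletes letters outside $\Delta$; $\le$ is the prefix order. $\mathrm{split}$ is the homomorphism $\Gamma^*\to\Sigma^*$, $p\to q:m\mapsto\mathsf{snd}(p,q,m)\mathsf{rcv}(p,q,m)$. $w\equiv w'$ iff $w\Downarrow_{\Sigma_p}=w'\Downarrow_{\Sigma_p}$ for all $p$. $w$ is compliant with $\beta\in\Gamma^*$ if $w\Downarrow_{\Sigma_r}\le\mathrm{split}(\beta)\Downarrow_{\Sigma_r}$ for all $r$. A network architecture is $\mathbb{A}=(C,B,\xi,\mathit{insert},\mathit{remove},b_0)$: channels $C$, channel contents $B$, $\xi:\mathcal{P}\times\mathcal{P}\to C$, for each message $\mu\in M=\mathcal{P}\times\mathcal{P}\times\mathcal{V}$ partial functions $\mathit{insert}(\mu),\mathit{remove}(\mu):B\rightharpoonup B$, and $b_0\in B$. Channel states are maps $C\to B$, $\chi_0$ maps all channels to $b_0$;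 $\mathsf{snd}(p,q,m)$ applies $\mathit{insert}((p,q,m))$ at channel $\xi(p,q)$ and $\mathsf{rcv}(p,q,m)$ applies $\mathit{remove}((p,q,m))$ at channel $\xi(p,q)$. $w\in\Sigma^*$ is channel-compliant if applying its letters in order from $\chi_0$ is always defined, and channel-matched if moreover the result is $\chi_0$. Buffer axioms. Let $\mathit{Ops}$ be the set of all $\mathit{insert}(\mu),\mathit{remove}(\mu)$; a sequence $o=o_1\dots o_n\in\mathit{Ops}^*$ denotes the composite partial function $o_n\circ\dots\circ o_1$ (the empty sequence is the identity), and $b.f$ means $f(b)$. For all $b\in B$, $\mu,\nu\in M$, $o\in\mathit{Ops}^*$: (B1) $b.\mathit{insert}(\mu)$ is defined; (B2) $b_0.\mathit{insert}(\mu).\mathit{remove}(\mu)$ is defined; (B3) $b_0.\mathit{remove}(\mu)$ is undefined; (B4) if $b.\mathit{remove}(\mu)$ is defined then $b.\mathit{insert}(\nu).\mathit{remove}(\mu)$ is defined; (B5) if $b.\mathit{insert}(\mu).o$ is defined and $\mathit{remove}(\mu)$ does not occur in $o$, then $b.o$ is defined; (B6) if $b.\mathit{remove}(\mu)$ is defined then $b.\mathit{insert}(\mu).\mathit{remove}(\mu)=b.\mathit{remove}(\mu).\mathit{insert}(\mu)$; (B7) if $\mu\neq\nu$ then $b.\mathit{insert}(\mu).\mathit{remove}(\nu)=b.\mathit{remove}(\nu).\mathit{insert}(\mu)$; (B8) if $b.\mathit{remove}(\mu)$ is undefined, $b.\mathit{insert}(\mu).o.\mathit{remove}(\mu)$ is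 defined, and $\mathit{remove}(\mu)$ does not occur in $o$, then $b.\mathit{insert}(\mu).o.\mathit{remove}(\mu)=b.o$. Channel compliance facts, where in each $w\in\Sigma^*$ is channel-compliant: (CC1) for all $x\in\Sigma_!$, $wx$ is channel-compliant; (CC2) for all $p\neq q$, $m$: the number of occurrences of $\mathsf{snd}(p,q,m)$ in $w$ is at least that of $\mathsf{rcv}(p,q,m)$; (CC3) for all $\rho\in\Gamma^*$, $\mathrm{split}(\rho)$ is channel-compliant; (CC4) for all $\rho\in\Gamma^*$, if $w\equiv\mathrm{split}(\rho)$ then $w$ is channel-matched; (CC5) for all $x\in\Sigma_!$, $y\in\Sigma_?$, if $wy$ is channel-compliant then $wxy$ is; (CC6) for all $\alpha,\beta\in\Gamma^*$, $p\neq q$, $m$: if $w\Downarrow_{\Sigma_r}\le\mathrm{split}(\alpha\beta)\Downarrow_{\Sigma_r}$ for all $r$, $w\Downarrow_{\Sigma_q}=\mathrm{split}(\alpha)\Downarrow_{\Sigma_q}$, and $w\cdot\mathsf{rcv}(p,q,m)$ is channel-compliant, then there is $w'$ compliant with $\beta$ with $w'\Downarrow_{\Sigma_q}=\varepsilon$ and $w'\cdot\mathsf{rcv}(p,q,m)$ channel-compliant. *)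

theory Defs
  imports Main "HOL-Library.Sublist"
begin

datatype ('p,'v) gam = Comm 'p 'p 'v

datatype ('p,'v) sig = Snd 'p 'p 'v | Rcv 'p 'p 'v

type_synonym ('p,'v) msg = "'p \<times> 'p \<times> 'v"

definition sends :: "('p,'v) sig set" where
  "sends = {x. \<exists>p q m. x = Snd p q m}"

definition recvs :: "('p,'v) sig set" where
  "recvs = {x. \<exists>p q m. x = Rcv p q m}"

definition Sig_of :: "'p \<Rightarrow> ('p,'v) sig set" where
  "Sig_of p = {x. \<exists>q m. x = Snd p q m \<or> x = Rcv q p m}"

definition proj :: "('p,'v) sig list \<Rightarrow> ('p,'v) sig set \<Rightarrow> ('p,'v) sig list" where
  "proj w D = filter (\<lambda>x. x \<in> D) w"

fun split_letter :: "('p,'v) gam \<Rightarrow> ('p,'v) sig list" where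
  "split_letter (Comm p q m) = [Snd p q m, Rcv p q m]"

definition split :: "('p,'v) gam list \<Rightarrow> ('p,'v) sig list" where
  "split \<rho> = concat (map split_letter \<rho>)"

definition sig_equiv :: "('p,'v) sig list \<Rightarrow> ('p,'v) sig list \<Rightarrow> bool" where
  "sig_equiv w w' \<longleftrightarrow> (\<forall>p. proj w (Sig_of p) = proj w' (Sig_of p))"

definition compliant :: "('p,'v) sig list \<Rightarrow> ('p,'v) gam list \<Rightarrow> bool" where
  "compliant w \<beta> \<longleftrightarrow> (\<forall>r. prefix (proj w (Sig_of r)) (proj (split \<beta>) (Sig_of r)))"

text \<open>Network architecture: channels are the type 'c, channel contents the type 'b;
  insert/remove are partial functions modelled with option.\<close>
record ('p,'v,'c,'b) arch =
  xi :: "'p \<Rightarrow> 'p \<Rightarrow> 'c"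
  ins :: "('p,'v) msg \<Rightarrow> 'b \<Rightarrow> 'b option"
  rem :: "('p,'v) msg \<Rightarrow> 'b \<Rightarrow> 'b option"
  b0 :: 'b

datatype ('p,'v) bop = Ins "('p,'v) msg" | Rem "('p,'v) msg"

fun op_app :: "('p,'v,'c,'b) arch \<Rightarrow> ('p,'v) bop \<Rightarrow> 'b \<Rightarrow> 'b option" where
  "op_app A (Ins \<mu>) b = ins A \<mu> b"
| "op_app A (Rem \<mu>) b = rem A \<mu> b"

fun ops_app :: "('p,'v,'c,'b) arch \<Rightarrow> ('p,'v) bop list \<Rightarrow> 'b \<Rightarrow> 'b option" where
  "ops_app A [] b = Some b"
| "ops_app A (o1 # os) b = Option.bind (op_app A o1 b) (ops_app A os)"

definition buffer_axioms :: "('p,'v,'c,'b) arch \<Rightarrow> bool" where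
  "buffer_axioms A \<longleftrightarrow>
    (\<forall>b \<mu>. ins A \<mu> b \<noteq> None) \<and>
    (\<forall>\<mu>. ops_app A [Ins \<mu>, Rem \<mu>] (b0 A) \<noteq> None) \<and>
    (\<forall>\<mu>. rem A \<mu> (b0 A) = None) \<and>
    (\<forall>b \<mu> \<nu>. rem A \<mu> b \<noteq> None \<longrightarrow> ops_app A [Ins \<nu>, Rem \<mu>] b \<noteq> None) \<and>
    (\<forall>b \<mu> os. ops_app A (Ins \<mu> # os) b \<noteq> None \<and> Rem \<mu> \<notin> set os \<longrightarrow> ops_app A os b \<noteq> None) \<and>
    (\<forall>b \<mu>. rem A \<mu> b \<noteq> None \<longrightarrow> ops_app A [Ins \<mu>, Rem \<mu>] b = ops_app A [Rem \<mu>, Ins \<mu>] b) \<and>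
    (\<forall>b \<mu> \<nu>. \<mu> \<noteq> \<nu> \<longrightarrow> ops_app A [Ins \<mu>, Rem \<nu>] b = ops_app A [Rem \<nu>, Ins \<mu>] b) \<and>
    (\<forall>b \<mu> os. rem A \<mu> b = None \<and> ops_app A (Ins \<mu> # os @ [Rem \<mu>]) b \<noteq> None \<and> Rem \<mu> \<notin> set os
        \<longrightarrow> ops_app A (Ins \<mu> # os @ [Rem \<mu>]) b = ops_app A os b)"

fun step :: "('p,'v,'c,'b) arch \<Rightarrow> ('p,'v) sig \<Rightarrow> ('c \<Rightarrow> 'b) \<Rightarrow> ('c \<Rightarrow> 'b) option" where
  "step A (Snd p q m) \<chi> =
     map_option (\<lambda>b. \<chi>(xi A p q := b)) (ins A (p,q,m) (\<chi> (xi A p q)))"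
| "step A (Rcv p q m) \<chi> =
     map_option (\<lambda>b. \<chi>(xi A p q := b)) (rem A (p,q,m) (\<chi> (xi A p q)))"

fun run :: "('p,'v,'c,'b) arch \<Rightarrow> ('p,'v) sig list \<Rightarrow> ('c \<Rightarrow> 'b) \<Rightarrow> ('c \<Rightarrow> 'b) option" where
  "run A [] \<chi> = Some \<chi>"
| "run A (x # w) \<chi> = Option.bind (step A x \<chi>) (run A w)"

definition chi0 :: "('p,'v,'c,'b) arch \<Rightarrow> 'c \<Rightarrow> 'b" where
  "chi0 A = (\<lambda>_. b0 A)"

definition ch_compliant :: "('p,'v,'c,'b) arch \<Rightarrow> ('p,'v) sig list \<Rightarrow> bool" where
  "ch_compliant A w \<longleftrightarrow> run A w (chi0 A) \<noteq> None"

definition ch_matched :: "('p,'v,'c,'b) arch \<Rightarrow> ('p,'v) sig list \<Rightarrow> bool" where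
  "ch_matched A w \<longleftrightarrow> run A w (chi0 A) = Some (chi0 A)"

definition CC1 :: "('p,'v,'c,'b) arch \<Rightarrow> bool" where
  "CC1 A \<longleftrightarrow> (\<forall>w x. ch_compliant A w \<and> x \<in> sends \<longrightarrow> ch_compliant A (w @ [x]))"

definition CC2 :: "('p,'v,'c,'b) arch \<Rightarrow> bool" where
  "CC2 A \<longleftrightarrow> (\<forall>w p q m. ch_compliant A w \<and> p \<noteq> q \<longrightarrow>
      count_list w (Rcv p q m) \<le> count_list w (Snd p q m))"

definition CC3 :: "('p,'v,'c,'b) arch \<Rightarrow> bool" where
  "CC3 A \<longleftrightarrow> (\<forall>\<rho>. ch_compliant A (split \<rho>))"

definition CC4 :: "('p,'v,'c,'b) arch \<Rightarrow> bool" where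
  "CC4 A \<longleftrightarrow> (\<forall>w \<rho>. ch_compliant A w \<and> sig_equiv w (split \<rho>) \<longrightarrow> ch_matched A w)"

definition CC5 :: "('p,'v,'c,'b) arch \<Rightarrow> bool" where
  "CC5 A \<longleftrightarrow> (\<forall>w x y. ch_compliant A w \<and> x \<in> sends \<and> y \<in> recvs \<and> ch_compliant A (w @ [y])
      \<longrightarrow> ch_compliant A (w @ [x, y]))"

definition CC6 :: "('p,'v,'c,'b) arch \<Rightarrow> bool" where
  "CC6 A \<longleftrightarrow> (\<forall>w \<alpha> \<beta> p q m. ch_compliant A w \<and> p \<noteq> q \<and>
      (\<forall>r. prefix (proj w (Sig_of r)) (proj (split (\<alpha> @ \<beta>)) (Sig_of r))) \<and>
      proj w (Sig_of q) = proj (split \<alpha>) (Sig_of q) \<and>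
      ch_compliant A (w @ [Rcv p q m])
      \<longrightarrow> (\<exists>w'. compliant w' \<beta> \<and> proj w' (Sig_of q) = [] \<and> ch_compliant A (w' @ [Rcv p q m])))"

end

theory Submission
  imports Defs
begin


definition chan :: "('p,'v,'c,'b) arch \<Rightarrow> ('p,'v) sig \<Rightarrow> 'c" where
  "chan A x = (case x of Snd p q m \<Rightarrow> xi A p q | Rcv p q m \<Rightarrow> xi A p q)"

definition toop :: "('p,'v) sig \<Rightarrow> ('p,'v) bop" where
  "toop x = (case x of Snd p q m \<Rightarrow> Ins (p,q,m) | Rcv p q m \<Rightarrow> Rem (p,q,m))"

definition chops :: "('p,'v,'c,'b) arch \<Rightarrow> 'c \<Rightarrow> ('p,'v) sig list \<Rightarrow> ('p,'v) bop list" where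
  "chops A c w = map toop (filter (\<lambda>x. chan A x = c) w)"

lemma chan_simps[simp]: "chan A (Snd p q m) = xi A p q" "chan A (Rcv p q m) = xi A p q"
  by (simp_all add: chan_def)

lemma toop_simps[simp]: "toop (Snd p q m) = Ins (p,q,m)" "toop (Rcv p q m) = Rem (p,q,m)"
  by (simp_all add: toop_def)

lemma toop_inj[simp]: "toop x = toop y \<longleftrightarrow> x = y"
  by (cases x; cases y; simp)

lemma step_eq: "step A x \<chi> = map_option (\<lambda>b. \<chi>(chan A x := b)) (op_app A (toop x) (\<chi> (chan A x)))"
  by (cases x) simp_all

lemma ops_app_append: "ops_app A (xs @ ys) b = Option.bind (ops_app A xs b) (ops_app A ys)"
  by (induction xs arbitrary: b) (auto split: Option.bind_split)

lemma run_append: "run A (xs @ ys) \<chi> = Option.bind (run A xs \<chi>) (run A ys)"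
  by (induction xs arbitrary: \<chi>) (auto split: Option.bind_split)

lemma chops_Cons: "chops A c (x # w) = (if chan A x = c then toop x # chops A c w else chops A c w)"
  by (simp add: chops_def)

lemma chops_append[simp]: "chops A c (u @ v) = chops A c u @ chops A c v"
  by (simp add: chops_def)

lemma chops_Nil[simp]: "chops A c [] = []"
  by (simp add: chops_def)

lemma run_chops: "run A w \<chi> = (if (\<forall>c. ops_app A (chops A c w) (\<chi> c) \<noteq> None)
   then Some (\<lambda>c. the (ops_app A (chops A c w) (\<chi> c))) else None)"
proof (induction w arbitrary: \<chi>)
  case Nil
  then show ?case by simp
next
  case (Cons x w)
  show ?case
  proof (cases "op_app A (toop x) (\<chi> (chan A x))")
    case None
    then have "ops_app A (chops A (chan A x) (x#w)) (\<chi> (chan A x)) = None" by (simp add: chops_Cons)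
    then show ?thesis using None by (auto simp: step_eq)
  next
    case (Some b)
    have e2: "ops_app A (chops A c (x#w)) (\<chi> c) = ops_app A (chops A c w) ((\<chi>(chan A x := b)) c)" for c
      using Some by (simp add: chops_Cons)
    have "run A (x#w) \<chi> = run A w (\<chi>(chan A x := b))" using Some by (simp add: step_eq)
    then show ?thesis using Cons.IH[of "\<chi>(chan A x := b)"] by (simp only: e2)
  qed
qed

lemma run_ne_iff: "run A w \<chi> \<noteq> None \<longleftrightarrow> (\<forall>c. ops_app A (chops A c w) (\<chi> c) \<noteq> None)"
  by (subst run_chops) simp

lemma run_eqI: "(\<And>c. ops_app A (chops A c w1) (\<chi> c) = ops_app A (chops A c w2) (\<chi> c)) \<Longrightarrow> run A w1 \<chi> = run A w2 \<chi>"
  by (simp add: run_chops[of A w1 \<chi>] run_chops[of A w2 \<chi>])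

lemma count_chops: "count_list (chops A c w) (toop x) = (if chan A x = c then count_list w x else 0)"
  by (induction w) (auto simp: chops_Cons)

lemma mem_chops: "toop x \<in> set (chops A c w) \<longleftrightarrow> x \<in> set w \<and> chan A x = c"
  by (auto simp: chops_def)


lemma ops_app_Nil_fun[simp]: "ops_app A [] = Some" by (rule ext) simp

lemma ops_app_prefix: "ops_app A (xs @ ys) b \<noteq> None \<Longrightarrow> ops_app A xs b \<noteq> None"
  by (cases "ops_app A xs b") (auto simp: ops_app_append)

lemma ops_app_replace: "ops_app A X b = ops_app A Y b \<Longrightarrow> ops_app A a b' = Some b \<Longrightarrow>
  ops_app A (a @ X @ y) b' = ops_app A (a @ Y @ y) b'"
  by (simp add: ops_app_append)

lemma B1: "buffer_axioms A \<Longrightarrow> ins A \<mu> b \<noteq> None" unfolding buffer_axioms_def by meson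
lemma B2: "buffer_axioms A \<Longrightarrow> ops_app A [Ins \<mu>, Rem \<mu>] (b0 A) \<noteq> None" unfolding buffer_axioms_def by meson
lemma B3: "buffer_axioms A \<Longrightarrow> rem A \<mu> (b0 A) = None" unfolding buffer_axioms_def by meson
lemma B4: "buffer_axioms A \<Longrightarrow> rem A \<mu> b \<noteq> None \<Longrightarrow> ops_app A [Ins \<nu>, Rem \<mu>] b \<noteq> None"
  unfolding buffer_axioms_def by meson
lemma B5: "buffer_axioms A \<Longrightarrow> ops_app A (Ins \<mu> # os) b \<noteq> None \<Longrightarrow> Rem \<mu> \<notin> set os \<Longrightarrow> ops_app A os b \<noteq> None"
  unfolding buffer_axioms_def by meson
lemma B7: "buffer_axioms A \<Longrightarrow> \<mu> \<noteq> \<nu> \<Longrightarrow> ops_app A [Ins \<mu>, Rem \<nu>] b = ops_app A [Rem \<nu>, Ins \<mu>] b"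
  unfolding buffer_axioms_def by meson
lemma B8: "buffer_axioms A \<Longrightarrow> rem A \<mu> b = None \<Longrightarrow> ops_app A (Ins \<mu> # os @ [Rem \<mu>]) b \<noteq> None
   \<Longrightarrow> Rem \<mu> \<notin> set os \<Longrightarrow> ops_app A (Ins \<mu> # os @ [Rem \<mu>]) b = ops_app A os b"
  unfolding buffer_axioms_def by meson

lemma comm_ins_rem:
  assumes BA: "buffer_axioms A" and "\<forall>x\<in>set a. \<exists>\<mu>. x = Ins \<mu> \<and> \<mu> \<noteq> \<nu>"
  shows "ops_app A (a @ [Rem \<nu>]) b = ops_app A (Rem \<nu> # a) b"
  using assms(2)
proof (induction a arbitrary: b)
  case Nil
  then show ?case by simp
next
  case (Cons x a)
  then obtain \<mu> where x: "x = Ins \<mu>" "\<mu> \<noteq> \<nu>" by auto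
  obtain b' where b': "ins A \<mu> b = Some b'" using B1[OF BA, of \<mu> b] by auto
  have IH: "ops_app A (a @ [Rem \<nu>]) b' = ops_app A (Rem \<nu> # a) b'" using Cons by auto
  have s7: "ops_app A [Ins \<mu>, Rem \<nu>] b = ops_app A [Rem \<nu>, Ins \<mu>] b" using B7[OF BA x(2)] .
  show ?case
  proof (cases "rem A \<nu> b")
    case None
    with s7 b' have "rem A \<nu> b' = None" by (auto split: Option.bind_split_asm)
    then show ?thesis using None x b' IH by simp
  next
    case (Some b1)
    obtain b2 where b2: "ins A \<mu> b1 = Some b2" using B1[OF BA, of \<mu> b1] by auto
    with s7 b' Some have "rem A \<nu> b' = Some b2" by (auto split: Option.bind_split_asm)
    then show ?thesis using Some x b' b2 IH by simp
  qed
qed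

lemma count_ops:
  assumes BA: "buffer_axioms A"
  shows "ops_app A os (b0 A) \<noteq> None \<Longrightarrow> count_list os (Rem \<mu>) \<le> count_list os (Ins \<mu>)"
proof (induction "length os" arbitrary: os \<mu> rule: less_induct)
  case less
  show ?case
  proof (cases "\<exists>x\<in>set os. \<exists>\<nu>. x = Rem \<nu>")
    case False
    then have "count_list os (Rem \<mu>) = 0" by (metis count_list_0_iff)
    then show ?thesis by simp
  next
    case True
    from split_list_first_prop[OF True] obtain o1 x o2 where
      d: "os = o1 @ x # o2" "\<exists>\<nu>. x = Rem \<nu>" "\<forall>y\<in>set o1. \<not>(\<exists>\<nu>. y = Rem \<nu>)" by blast
    then obtain \<nu> where x\<nu>: "x = Rem \<nu>" by blast
    have allins: "\<forall>y\<in>set o1. \<exists>\<mu>. y = Ins \<mu>" using d(3) by (metis bop.exhaust)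
    have pre: "ops_app A (o1 @ [Rem \<nu>]) (b0 A) \<noteq> None"
      using less.prems d(1) x\<nu> ops_app_prefix[of A "o1 @ [Rem \<nu>]" o2 "b0 A"] by auto
    show ?thesis
    proof (cases "Ins \<nu> \<in> set o1")
      case False
      then have "\<forall>y\<in>set o1. \<exists>\<mu>. y = Ins \<mu> \<and> \<mu> \<noteq> \<nu>" using allins by auto
      from comm_ins_rem[OF BA this] have "ops_app A (o1 @ [Rem \<nu>]) (b0 A) = ops_app A (Rem \<nu> # o1) (b0 A)" .
      also have "\<dots> = None" using B3[OF BA] by simp
      finally show ?thesis using pre by simp
    next
      case True
      from split_list_first[OF True] obtain a c where ac: "o1 = a @ Ins \<nu> # c" "Ins \<nu> \<notin> set a" by blast
      have aI: "\<forall>y\<in>set a. \<exists>\<mu>. y = Ins \<mu> \<and> \<mu> \<noteq> \<nu>"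
      proof
        fix y assume y: "y \<in> set a"
        then have "y \<in> set o1" using ac(1) by simp
        then obtain \<mu> where "y = Ins \<mu>" using allins by blast
        then show "\<exists>\<mu>. y = Ins \<mu> \<and> \<mu> \<noteq> \<nu>" using y ac(2) by blast
      qed
      have cR: "Rem \<nu> \<notin> set c"
      proof
        assume "Rem \<nu> \<in> set c"
        then have "Rem \<nu> \<in> set o1" using ac(1) by simp
        then show False using d(3) by blast
      qed
      have pre2: "ops_app A (a @ (Ins \<nu> # c @ [Rem \<nu>])) (b0 A) \<noteq> None" using pre ac by simp
      obtain b where b: "ops_app A a (b0 A) = Some b" using pre2 
        by (cases "ops_app A a (b0 A)") (auto simp: ops_app_append)
      have "ops_app A (a @ [Rem \<nu>]) (b0 A) = None" using comm_ins_rem[OF BA aI] B3[OF BA] by simp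
      then have rn: "rem A \<nu> b = None" using b by (simp add: ops_app_append split: Option.bind_split_asm)
      have d2: "ops_app A (Ins \<nu> # c @ [Rem \<nu>]) b \<noteq> None" using pre2 b by (simp only: ops_app_append) simp
      have eq: "ops_app A (Ins \<nu> # c @ [Rem \<nu>]) b = ops_app A c b" using B8[OF BA rn d2 cR] .
      have "os = a @ (Ins \<nu> # c @ [Rem \<nu>]) @ o2" using d(1) x\<nu> ac by simp
      then have "ops_app A os (b0 A) = ops_app A (a @ c @ o2) (b0 A)"
        using ops_app_replace[OF eq b, of o2] by simp
      then have "ops_app A (a @ c @ o2) (b0 A) \<noteq> None" using less.prems by simp
      moreover have "length (a @ c @ o2) < length os" using d(1) ac by simp
      ultimately have IH: "count_list (a @ c @ o2) (Rem \<mu>) \<le> count_list (a @ c @ o2) (Ins \<mu>)"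
        using less.hyps by blast
      then show ?thesis using d(1) x\<nu> ac by auto
    qed
  qed
qed

lemma ins_exists:
  assumes BA: "buffer_axioms A" and "ops_app A (x @ [Rem \<nu>]) (b0 A) \<noteq> None" "Rem \<nu> \<notin> set x"
  shows "Ins \<nu> \<in> set x"
proof -
  have "count_list (x @ [Rem \<nu>]) (Rem \<nu>) \<le> count_list (x @ [Rem \<nu>]) (Ins \<nu>)"
    using count_ops[OF BA assms(2)] .
  then have "count_list x (Ins \<nu>) \<noteq> 0" by simp
  then show ?thesis by (metis count_list_0_iff)
qed

lemma red_ops:
  assumes BA: "buffer_axioms A"
    and def: "ops_app A (a @ Ins \<nu> # c @ Rem \<nu> # y) (b0 A) \<noteq> None"
    and "Ins \<nu> \<notin> set a" "Rem \<nu> \<notin> set a" "Rem \<nu> \<notin> set c"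
  shows "ops_app A (a @ Ins \<nu> # c @ Rem \<nu> # y) (b0 A) = ops_app A (a @ c @ y) (b0 A)"
proof -
  have pre2: "ops_app A (a @ (Ins \<nu> # c @ [Rem \<nu>]) @ y) (b0 A) \<noteq> None" using def by simp
  obtain b where b: "ops_app A a (b0 A) = Some b" using pre2 
    by (cases "ops_app A a (b0 A)") (auto simp: ops_app_append)
  have rn: "rem A \<nu> b = None"
  proof (rule ccontr)
    assume "rem A \<nu> b \<noteq> None"
    then have "ops_app A (a @ [Rem \<nu>]) (b0 A) \<noteq> None" using b by (simp add: ops_app_append)
    then have "Ins \<nu> \<in> set a" using ins_exists[OF BA] assms(4) by blast
    then show False using assms(3) by simp
  qed
  have "ops_app A ((a @ (Ins \<nu> # c @ [Rem \<nu>])) @ y) (b0 A) \<noteq> None" using def by simp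
  then have "ops_app A (a @ (Ins \<nu> # c @ [Rem \<nu>])) (b0 A) \<noteq> None" by (rule ops_app_prefix)
  then have d2: "ops_app A (Ins \<nu> # c @ [Rem \<nu>]) b \<noteq> None" using b by (simp add: ops_app_append)
  have eq: "ops_app A (Ins \<nu> # c @ [Rem \<nu>]) b = ops_app A c b" using B8[OF BA rn d2 assms(5)] .
  from ops_app_replace[OF eq b, of y] show ?thesis by simp
qed


lemma run_prefix: "run A (xs @ ys) \<chi> \<noteq> None \<Longrightarrow> run A xs \<chi> \<noteq> None"
  by (cases "run A xs \<chi>") (auto simp: run_append)

lemma chi0_app[simp]: "chi0 A c = b0 A" by (simp add: chi0_def)

lemma count_chops_Snd: "count_list (chops A c w) (Ins (p,q,m)) = (if xi A p q = c then count_list w (Snd p q m) else 0)"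
  using count_chops[of A c w "Snd p q m"] by simp
lemma count_chops_Rcv: "count_list (chops A c w) (Rem (p,q,m)) = (if xi A p q = c then count_list w (Rcv p q m) else 0)"
  using count_chops[of A c w "Rcv p q m"] by simp
lemma mem_chops_Snd[simp]: "Ins (p,q,m) \<in> set (chops A c w) \<longleftrightarrow> Snd p q m \<in> set w \<and> xi A p q = c"
  using mem_chops[of "Snd p q m" A c w] by simp
lemma mem_chops_Rcv[simp]: "Rem (p,q,m) \<in> set (chops A c w) \<longleftrightarrow> Rcv p q m \<in> set w \<and> xi A p q = c"
  using mem_chops[of "Rcv p q m" A c w] by simp

lemma chops_Snd[simp]: "chops A c [Snd p q m] = (if xi A p q = c then [Ins (p,q,m)] else [])"
  by (simp add: chops_def)
lemma chops_Rcv[simp]: "chops A c [Rcv p q m] = (if xi A p q = c then [Rem (p,q,m)] else [])"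
  by (simp add: chops_def)

lemma EC:
  assumes BA: "buffer_axioms A" and "run A w (chi0 A) \<noteq> None"
  shows "count_list w (Rcv p q m) \<le> count_list w (Snd p q m)"
proof -
  have "ops_app A (chops A (xi A p q) w) (b0 A) \<noteq> None"
    using assms(2) run_ne_iff[of A w "chi0 A"] by simp
  from count_ops[OF BA this, of "(p,q,m)"] show ?thesis
    by (simp add: count_chops_Snd count_chops_Rcv)
qed

lemma EP:
  assumes BA: "buffer_axioms A" and def: "run A (x @ Rcv p q m # y) (chi0 A) \<noteq> None"
    and nx: "Rcv p q m \<notin> set x"
  shows "\<exists>a c. x = a @ Snd p q m # c \<and> Snd p q m \<notin> set a \<and>
     run A (a @ c @ y) (chi0 A) = run A (x @ Rcv p q m # y) (chi0 A)"
proof -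
  have "run A ((x @ [Rcv p q m]) @ y) (chi0 A) \<noteq> None" using def by simp
  then have "run A (x @ [Rcv p q m]) (chi0 A) \<noteq> None" by (rule run_prefix)
  from EC[OF BA this, of p q m] have "count_list x (Snd p q m) \<noteq> 0" by simp
  then have "Snd p q m \<in> set x" by (metis count_list_0_iff)
  from split_list_first[OF this] obtain a c where ac: "x = a @ Snd p q m # c" "Snd p q m \<notin> set a" by blast
  have "run A (a @ c @ y) (chi0 A) = run A (x @ Rcv p q m # y) (chi0 A)"
  proof (rule run_eqI)
    fix c'
    show "ops_app A (chops A c' (a @ c @ y)) (chi0 A c') = ops_app A (chops A c' (x @ Rcv p q m # y)) (chi0 A c')"
    proof (cases "c' = xi A p q")
      case False
      then show ?thesis using ac by (simp add: chops_Cons)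
    next
      case True
      have d: "ops_app A (chops A c' (x @ Rcv p q m # y)) (b0 A) \<noteq> None"
        using def run_ne_iff[of A "x @ Rcv p q m # y" "chi0 A"] by simp
      have e: "chops A c' (x @ Rcv p q m # y) = chops A c' a @ Ins (p,q,m) # chops A c' c @ Rem (p,q,m) # chops A c' y"
        using True ac by (simp add: chops_Cons)
      have "ops_app A (chops A c' a @ Ins (p,q,m) # chops A c' c @ Rem (p,q,m) # chops A c' y) (b0 A)
          = ops_app A (chops A c' a @ chops A c' c @ chops A c' y) (b0 A)"
        by (rule red_ops[OF BA]) (use d e ac nx in auto)
      then show ?thesis using e by simp
    qed
  qed
  then show ?thesis using ac by blast
qed

lemma EB5:
  assumes BA: "buffer_axioms A" and def: "run A (u @ Snd p q m # v) (chi0 A) \<noteq> None"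
    and nv: "Rcv p q m \<notin> set v"
  shows "run A (u @ v) (chi0 A) \<noteq> None"
  unfolding run_ne_iff
proof
  fix c
  have d: "ops_app A (chops A c (u @ Snd p q m # v)) (b0 A) \<noteq> None"
    using def run_ne_iff[of A "u @ Snd p q m # v" "chi0 A"] by simp
  show "ops_app A (chops A c (u @ v)) (chi0 A c) \<noteq> None"
  proof (cases "c = xi A p q")
    case False
    then show ?thesis using d by (simp add: chops_Cons)
  next
    case True
    then have d': "ops_app A (chops A c u @ Ins (p,q,m) # chops A c v) (b0 A) \<noteq> None"
      using d by (simp add: chops_Cons)
    then obtain b where b: "ops_app A (chops A c u) (b0 A) = Some b"
      by (cases "ops_app A (chops A c u) (b0 A)") (auto simp: ops_app_append)
    then have "ops_app A (Ins (p,q,m) # chops A c v) b \<noteq> None" using d' by (simp add: ops_app_append del: ops_app.simps)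
    from B5[OF BA this] have "ops_app A (chops A c v) b \<noteq> None" using nv by simp
    then show ?thesis using b by (simp add: ops_app_append)
  qed
qed

lemma fun_upd_lam: "(\<lambda>a. if a = x then v else n a) = n(x := v)"
  by (rule ext) simp

fun rmvE :: "('a \<Rightarrow> nat) \<Rightarrow> 'a list \<Rightarrow> 'a list" where
  "rmvE n [] = []"
| "rmvE n (x # w) = (if 0 < n x then rmvE (n(x := n x - 1)) w else x # rmvE n w)"

lemma rmvE_zero: "\<forall>x\<in>set w. n x = 0 \<Longrightarrow> rmvE n w = w"
  by (induction w) auto

lemma rmvE_all: "\<forall>x\<in>set w. count_list w x \<le> n x \<Longrightarrow> rmvE n w = []"
proof (induction w arbitrary: n)
  case Nil then show ?case by simp
next
  case (Cons x w)
  have "0 < n x" using Cons.prems by auto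
  moreover have "\<forall>y\<in>set w. count_list w y \<le> (n(x := n x - 1)) y"
    using Cons.prems by (auto split: if_splits)
  ultimately show ?case using Cons.IH by simp
qed

lemma rmvE_append: "rmvE n (u @ v) = rmvE n u @ rmvE (\<lambda>x. n x - count_list u x) v"
proof (induction u arbitrary: n)
  case Nil then show ?case by simp
next
  case (Cons y u)
  show ?case
  proof (cases "0 < n y")
    case True
    have "(\<lambda>x. (n(y := n y - 1)) x - count_list u x) = (\<lambda>x. n x - count_list (y # u) x)"
      using True by (auto simp: fun_eq_iff)
    then show ?thesis using True Cons.IH[of "n(y := n y - 1)"] by (simp add: fun_upd_lam)
  next
    case False
    have "(\<lambda>x. n x - count_list u x) = (\<lambda>x. n x - count_list (y # u) x)"
      using False by (auto simp: fun_eq_iff)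
    then show ?thesis using False Cons.IH[of n] by simp
  qed
qed

lemma rmvE_rmvE: "rmvE n1 (rmvE n2 w) = rmvE (\<lambda>x. n1 x + n2 x) w"
proof (induction w arbitrary: n1 n2)
  case Nil then show ?case by simp
next
  case (Cons y w)
  show ?case
  proof (cases "0 < n2 y")
    case True
    have "(\<lambda>x. n1 x + (n2(y := n2 y - 1)) x) = (\<lambda>x. n1 x + n2 x)(y := n1 y + n2 y - 1)"
      using True by (auto simp: fun_eq_iff)
    then show ?thesis using True Cons.IH[of n1 "n2(y := n2 y - 1)"] by (simp add: fun_upd_lam)
  next
    case False
    show ?thesis
    proof (cases "0 < n1 y")
      case True
      have "(\<lambda>x. (n1(y := n1 y - 1)) x + n2 x) = (\<lambda>x. n1 x + n2 x)(y := n1 y + n2 y - 1)"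
        using True False by (auto simp: fun_eq_iff)
      then show ?thesis using True False Cons.IH[of "n1(y := n1 y - 1)" n2] by (simp add: fun_upd_lam)
    next
      case False2: False
      then show ?thesis using False Cons.IH[of n1 n2] by simp
    qed
  qed
qed

lemma count_rmvE: "count_list (rmvE n w) x = count_list w x - n x"
  by (induction w arbitrary: n) auto

lemma set_rmvE: "set (rmvE n w) \<subseteq> set w"
  by (induction w arbitrary: n) auto

lemma rmvE_remove: "x \<notin> set u \<Longrightarrow> 0 < n x \<Longrightarrow> rmvE n (u @ x # v) = rmvE (n(x := n x - 1)) (u @ v)"
proof (induction u arbitrary: n)
  case Nil then show ?case by (simp add: fun_upd_lam)
next
  case (Cons y u)
  then have yx: "y \<noteq> x" by auto
  show ?case
  proof (cases "0 < n y")
    case True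
    then show ?thesis using Cons yx by (simp add: fun_upd_twist fun_upd_lam)
  next
    case False
    then show ?thesis using Cons yx by simp
  qed
qed

lemma rmvE_cong: "\<forall>x\<in>set w. n x = n' x \<Longrightarrow> rmvE n w = rmvE n' w"
  by (induction w arbitrary: n n') auto

lemma proj_rmvE: "proj (rmvE n w) D = rmvE n (proj w D)"
proof (induction w arbitrary: n)
  case Nil then show ?case by (simp add: proj_def)
next
  case (Cons a w)
  show ?case
  proof (cases "a \<in> D")
    case True
    have pc: "proj (a # w) D = a # proj w D" using True by (simp add: proj_def)
    show ?thesis
    proof (cases "0 < n a")
      case True2: True
      have "proj (rmvE n (a#w)) D = proj (rmvE (n(a:=n a - 1)) w) D" using True2 by simp
      also have "\<dots> = rmvE (n(a:=n a - 1)) (proj w D)" by (rule Cons.IH)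
      also have "\<dots> = rmvE n (proj (a#w) D)" unfolding pc using True2 by simp
      finally show ?thesis .
    next
      case False2: False
      have "proj (rmvE n (a#w)) D = a # proj (rmvE n w) D" using False2 True by (simp add: proj_def)
      also have "\<dots> = a # rmvE n (proj w D)" using Cons.IH by simp
      also have "\<dots> = rmvE n (proj (a#w) D)" unfolding pc using False2 by simp
      finally show ?thesis .
    qed
  next
    case False
    have "rmvE (n(a := n a - 1)) (proj w D) = rmvE n (proj w D)"
      by (rule rmvE_cong) (use False in \<open>auto simp: proj_def\<close>)
    note cg = this
    have pc: "proj (a # w) D = proj w D" using False by (simp add: proj_def)
    show ?thesis
    proof (cases "0 < n a")
      case True2: True
      have "proj (rmvE n (a#w)) D = proj (rmvE (n(a:=n a - 1)) w) D" using True2 by simp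
      also have "\<dots> = rmvE (n(a:=n a - 1)) (proj w D)" by (rule Cons.IH)
      also have "\<dots> = rmvE n (proj (a#w) D)" unfolding pc using cg by simp
      finally show ?thesis .
    next
      case False2: False
      have "proj (rmvE n (a#w)) D = proj (rmvE n w) D" using False2 False by (simp add: proj_def)
      also have "\<dots> = rmvE n (proj w D)" by (rule Cons.IH)
      also have "\<dots> = rmvE n (proj (a#w) D)" unfolding pc by simp
      finally show ?thesis .
    qed
  qed
qed


lemma PAIR:
  assumes BA: "buffer_axioms A"
  shows "run A W (chi0 A) \<noteq> None \<Longrightarrow>
    \<forall>p q m. np (Snd p q m) = np (Rcv p q m) \<and> np (Rcv p q m) \<le> count_list W (Rcv p q m) \<Longrightarrow>
    run A (rmvE np W) (chi0 A) = run A W (chi0 A)"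
proof (induction "length W" arbitrary: W np rule: less_induct)
  case less
  show ?case
  proof (cases "\<exists>x\<in>set W. 0 < np x")
    case False
    then have "\<forall>x\<in>set W. np x = 0" by auto
    then show ?thesis by (simp add: rmvE_zero)
  next
    case True
    then obtain x where x: "x \<in> set W" "0 < np x" by blast
    obtain p q m where pos: "0 < np (Rcv p q m)"
      using x(2) less.prems(2) by (cases x) auto
    then have "count_list W (Rcv p q m) \<noteq> 0" using less.prems(2) by (metis le_zero_eq not_gr_zero)
    then have "Rcv p q m \<in> set W" by (metis count_list_0_iff)
    from split_list_first[OF this] obtain x1 y where xy: "W = x1 @ Rcv p q m # y" "Rcv p q m \<notin> set x1" by blast
    from EP[OF BA _ xy(2), of y] less.prems(1) xy(1) obtain a c where
      ac: "x1 = a @ Snd p q m # c" "Snd p q m \<notin> set a" "run A (a @ c @ y) (chi0 A) = run A W (chi0 A)"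
      by auto
    define np1 where "np1 = np(Rcv p q m := np (Rcv p q m) - 1)"
    define np' where "np' = np1(Snd p q m := np1 (Snd p q m) - 1)"
    have "rmvE np W = rmvE np1 ((a @ Snd p q m # c) @ y)"
      unfolding np1_def using xy ac pos by (simp add: rmvE_remove del: append_assoc)
    also have "\<dots> = rmvE np1 (a @ Snd p q m # (c @ y))" by simp
    also have "\<dots> = rmvE np' (a @ (c @ y))"
      unfolding np'_def using ac(2) pos less.prems(2) by (intro rmvE_remove) (auto simp: np1_def)
    finally have r: "rmvE np W = rmvE np' (a @ c @ y)" by simp
    have len: "length (a @ c @ y) < length W" using xy ac by simp
    have def': "run A (a @ c @ y) (chi0 A) \<noteq> None" using ac(3) less.prems(1) by simp
    have cnt: "count_list (a @ c @ y) (Rcv p' q' m') = count_list W (Rcv p' q' m') - (if (p',q',m') = (p,q,m) then 1 else 0)" for p' q' m'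
      using xy ac by auto
    have cond: "\<forall>p' q' m'. np' (Snd p' q' m') = np' (Rcv p' q' m') \<and> np' (Rcv p' q' m') \<le> count_list (a @ c @ y) (Rcv p' q' m')"
    proof (intro allI)
      fix p' q' m'
      show "np' (Snd p' q' m') = np' (Rcv p' q' m') \<and> np' (Rcv p' q' m') \<le> count_list (a @ c @ y) (Rcv p' q' m')"
      proof -
        have h: "np (Snd p' q' m') = np (Rcv p' q' m') \<and> np (Rcv p' q' m') \<le> count_list W (Rcv p' q' m')"
          using less.prems(2) by blast
        show ?thesis using h cnt[of p' q' m'] unfolding np'_def np1_def
          by (cases "(p',q',m') = (p,q,m)") (auto intro: diff_le_mono)
      qed
    qed
    have "run A (rmvE np' (a @ c @ y)) (chi0 A) = run A (a @ c @ y) (chi0 A)"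
      using less.hyps[OF len def' cond] .
    then show ?thesis using r ac(3) by simp
  qed
qed

lemma EXTRA:
  assumes BA: "buffer_axioms A"
  shows "run A V (chi0 A) \<noteq> None \<Longrightarrow>
    \<forall>x. 0 < ne x \<longrightarrow> (\<exists>p q m. x = Snd p q m \<and> Rcv p q m \<notin> set V) \<Longrightarrow>
    run A (rmvE ne V) (chi0 A) \<noteq> None"
proof (induction "length V" arbitrary: V ne rule: less_induct)
  case less
  show ?case
  proof (cases "\<exists>x\<in>set V. 0 < ne x")
    case False
    then have "\<forall>x\<in>set V. ne x = 0" by auto
    then show ?thesis using less.prems(1) by (simp add: rmvE_zero)
  next
    case True
    then obtain x where x: "x \<in> set V" "0 < ne x" by blast
    then obtain p q m where xs: "x = Snd p q m" "Rcv p q m \<notin> set V" using less.prems(2) by blast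
    from split_list_first[OF x(1)] obtain u v where uv: "V = u @ x # v" "x \<notin> set u" by blast
    define ne' where "ne' = ne(x := ne x - 1)"
    have r: "rmvE ne V = rmvE ne' (u @ v)" unfolding ne'_def uv(1) using uv(2) x(2) by (rule rmvE_remove)
    have def': "run A (u @ v) (chi0 A) \<noteq> None"
      using EB5[OF BA, of u p q m v] less.prems(1) uv(1) xs by auto
    have len: "length (u @ v) < length V" using uv by simp
    have cond: "\<forall>y. 0 < ne' y \<longrightarrow> (\<exists>p q m. y = Snd p q m \<and> Rcv p q m \<notin> set (u @ v))"
    proof (intro allI impI)
      fix y assume "0 < ne' y"
      then have "0 < ne y" unfolding ne'_def by (auto split: if_splits)
      then obtain p' q' m' where "y = Snd p' q' m'" "Rcv p' q' m' \<notin> set V" using less.prems(2) by blast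
      then show "\<exists>p q m. y = Snd p q m \<and> Rcv p q m \<notin> set (u @ v)" using uv(1) by auto
    qed
    show ?thesis using less.hyps[OF len def' cond] r by simp
  qed
qed

lemma KEY:
  assumes BA: "buffer_axioms A" and def: "run A W (chi0 A) \<noteq> None"
    and cond: "\<forall>p q m. n (Rcv p q m) \<le> count_list W (Rcv p q m) \<and> n (Rcv p q m) \<le> n (Snd p q m) \<and>
       (n (Rcv p q m) < count_list W (Rcv p q m) \<longrightarrow> n (Snd p q m) = n (Rcv p q m))"
  shows "run A (rmvE n W) (chi0 A) \<noteq> None"
proof -
  define np where "np x = (case x of Snd p q m \<Rightarrow> n (Rcv p q m) | Rcv p q m \<Rightarrow> n (Rcv p q m))" for x
  define ne where "ne x = n x - np x" for x
  have nn: "n = (\<lambda>x. ne x + np x)"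
  proof
    fix x show "n x = ne x + np x" using cond unfolding ne_def np_def by (cases x) auto
  qed
  have e1: "rmvE n W = rmvE ne (rmvE np W)" by (simp add: rmvE_rmvE nn)
  have p: "run A (rmvE np W) (chi0 A) = run A W (chi0 A)"
    by (rule PAIR[OF BA def]) (use cond in \<open>auto simp: np_def\<close>)
  have "run A (rmvE ne (rmvE np W)) (chi0 A) \<noteq> None"
  proof (rule EXTRA[OF BA])
    show "run A (rmvE np W) (chi0 A) \<noteq> None" using p def by simp
    show "\<forall>x. 0 < ne x \<longrightarrow> (\<exists>p q m. x = Snd p q m \<and> Rcv p q m \<notin> set (rmvE np W))"
    proof (intro allI impI)
      fix x assume x: "0 < ne x"
      show "\<exists>p q m. x = Snd p q m \<and> Rcv p q m \<notin> set (rmvE np W)"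
      proof (cases x)
        case (Snd p q m)
        then have lt: "n (Rcv p q m) < n (Snd p q m)" using x unfolding ne_def np_def by simp
        then have "count_list W (Rcv p q m) \<le> n (Rcv p q m)" proof -
          have "\<not> n (Rcv p q m) < count_list W (Rcv p q m)" using cond lt by auto
          then show ?thesis by simp
        qed
        then have "count_list (rmvE np W) (Rcv p q m) = 0" by (simp add: count_rmvE np_def)
        then show ?thesis using Snd by (metis count_list_0_iff)
      next
        case (Rcv p q m)
        then show ?thesis using x unfolding ne_def np_def by simp
      qed
    qed
  qed
  then show ?thesis using e1 by simp
qed


lemma Sig_Snd[simp]: "Snd p q m \<in> Sig_of r \<longleftrightarrow> r = p" by (auto simp: Sig_of_def)
lemma Sig_Rcv[simp]: "Rcv p q m \<in> Sig_of r \<longleftrightarrow> r = q" by (auto simp: Sig_of_def)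

lemma count_proj: "x \<in> D \<Longrightarrow> count_list (proj w D) x = count_list w x"
  by (induction w) (auto simp: proj_def)

lemma proj_append[simp]: "proj (u @ v) D = proj u D @ proj v D" by (simp add: proj_def)

lemma split_append[simp]: "split (a @ b) = split a @ split b" by (simp add: split_def)
lemma split_Nil[simp]: "split [] = []" by (simp add: split_def)
lemma split_Cons[simp]: "split (Comm p q m # r) = Snd p q m # Rcv p q m # split r" by (simp add: split_def)

lemma count_split: "count_list (split \<rho>) (Snd p q m) = count_list (split \<rho>) (Rcv p q m)"
proof (induction \<rho>)
  case Nil then show ?case by simp
next
  case (Cons g \<rho>) then show ?case by (cases g) auto
qed

lemma run_Nil_fun[simp]: "run A [] = Some" by (rule ext) simp

lemma pair_b0: assumes BA: "buffer_axioms A"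
  shows "\<exists>b1. ins A \<mu> (b0 A) = Some b1 \<and> rem A \<mu> b1 = Some (b0 A)"
proof -
  have "ops_app A (Ins \<mu> # [] @ [Rem \<mu>]) (b0 A) = ops_app A [] (b0 A)"
    by (rule B8[OF BA B3[OF BA]]) (use B2[OF BA, of \<mu>] in auto)
  then show ?thesis by (auto split: Option.bind_split_asm)
qed

lemma run_split: assumes BA: "buffer_axioms A" shows "run A (split \<rho>) (chi0 A) = Some (chi0 A)"
proof (induction \<rho>)
  case Nil then show ?case by simp
next
  case (Cons g \<rho>)
  obtain p q m where g: "g = Comm p q m" by (cases g) auto
  obtain b1 where b1: "ins A (p,q,m) (b0 A) = Some b1" "rem A (p,q,m) b1 = Some (b0 A)"
    using pair_b0[OF BA] by blast
  have e: "(\<lambda>a. b0 A)(xi A p q := b0 A) = (\<lambda>a. b0 A)" by auto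
  show ?case using Cons g b1 by (simp add: chi0_def e)
qed

lemma CC1_ok: assumes BA: "buffer_axioms A" shows "CC1 A"
  unfolding CC1_def ch_compliant_def sends_def
  using B1[OF BA] by (auto simp: run_append split: Option.bind_split)

lemma CC2_ok: assumes BA: "buffer_axioms A" shows "CC2 A"
  unfolding CC2_def ch_compliant_def using EC[OF BA] by blast

lemma CC3_ok: "buffer_axioms A \<Longrightarrow> CC3 A"
  unfolding CC3_def ch_compliant_def using run_split by (metis option.distinct(1))

lemma CC4_ok: assumes BA: "buffer_axioms A" shows "CC4 A"
  unfolding CC4_def ch_compliant_def ch_matched_def
proof (intro allI impI, elim conjE)
  fix w \<rho>
  assume def: "run A w (chi0 A) \<noteq> None" and eq: "sig_equiv w (split \<rho>)"
  have ce: "count_list w (Snd p q m) = count_list w (Rcv p q m)" for p q m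
  proof -
    have "count_list w (Snd p q m) = count_list (proj w (Sig_of p)) (Snd p q m)" by (simp add: count_proj)
    also have "\<dots> = count_list (proj (split \<rho>) (Sig_of p)) (Snd p q m)" using eq by (simp add: sig_equiv_def)
    also have "\<dots> = count_list (split \<rho>) (Rcv p q m)" by (simp add: count_proj count_split)
    also have "\<dots> = count_list (proj (split \<rho>) (Sig_of q)) (Rcv p q m)" by (simp add: count_proj)
    also have "\<dots> = count_list (proj w (Sig_of q)) (Rcv p q m)" using eq by (simp add: sig_equiv_def)
    also have "\<dots> = count_list w (Rcv p q m)" by (simp add: count_proj)
    finally show ?thesis .
  qed
  have "run A (rmvE (count_list w) w) (chi0 A) = run A w (chi0 A)"
    by (rule PAIR[OF BA def]) (simp add: ce)
  moreover have "rmvE (count_list w) w = []" by (rule rmvE_all) simp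
  ultimately show "run A w (chi0 A) = Some (chi0 A)" by simp
qed

lemma CC5_ok: fixes A :: "('p,'v,'c,'b) arch" assumes BA: "buffer_axioms A" shows "CC5 A"
  unfolding CC5_def ch_compliant_def sends_def recvs_def
proof (intro allI impI, elim conjE)
  fix w and x y :: "('p,'v) sig"
  assume def: "run A w (chi0 A) \<noteq> None" and xs: "x \<in> {x. \<exists>p q m. x = Snd p q m}"
    and ys: "y \<in> {x. \<exists>p q m. x = Rcv p q m}" and dy: "run A (w @ [y]) (chi0 A) \<noteq> None"
  obtain p q m where x: "x = Snd p q m" using xs by blast
  obtain p' q' m' where y: "y = Rcv p' q' m'" using ys by blast
  obtain \<chi> where chi: "run A w (chi0 A) = Some \<chi>" using def by blast
  have r: "rem A (p',q',m') (\<chi> (xi A p' q')) \<noteq> None" using dy chi y by (simp add: run_append)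
  obtain b where b: "ins A (p,q,m) (\<chi> (xi A p q)) = Some b" using B1[OF BA] by blast
  show "run A (w @ [x, y]) (chi0 A) \<noteq> None"
  proof (cases "xi A p q = xi A p' q'")
    case True
    have "ops_app A [Ins (p,q,m), Rem (p',q',m')] (\<chi> (xi A p' q')) \<noteq> None" using B4[OF BA r] .
    then have "rem A (p',q',m') b \<noteq> None" using b True by simp
    then show ?thesis using chi x y b True by (simp add: run_append)
  next
    case False
    then show ?thesis using chi x y b r by (simp add: run_append)
  qed
qed

lemma prefix_rmvE:
  assumes pre: "prefix u (Aa @ B)"
    and n: "\<forall>x\<in>set u. n x = min (count_list Aa x) (count_list u x)"
  shows "prefix (rmvE n u) B"
proof -
  from pre have "prefix u Aa \<or> (\<exists>u2. u = Aa @ u2 \<and> prefix u2 B)" by (simp add: prefix_append)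
  then show ?thesis
  proof
    assume "prefix u Aa"
    then have "count_list u x \<le> count_list Aa x" for x
      by (metis prefix_def count_list_append le_add1)
    then have "rmvE n u = []" using n by (intro rmvE_all) auto
    then show ?thesis by simp
  next
    assume "\<exists>u2. u = Aa @ u2 \<and> prefix u2 B"
    then obtain u2 where u2: "u = Aa @ u2" "prefix u2 B" by blast
    have nA: "\<forall>x\<in>set u. n x = count_list Aa x" using n u2(1) by auto
    have "rmvE n u = rmvE n Aa @ rmvE (\<lambda>x. n x - count_list Aa x) u2" using u2(1) rmvE_append by simp
    moreover have "rmvE n Aa = []" using nA u2(1) by (intro rmvE_all) auto
    moreover have "rmvE (\<lambda>x. n x - count_list Aa x) u2 = u2" using nA u2(1) by (intro rmvE_zero) auto
    ultimately show ?thesis using u2(2) by simp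
  qed
qed

lemma CC6_ok: assumes BA: "buffer_axioms A" shows "CC6 A"
  unfolding CC6_def ch_compliant_def
proof (intro allI impI, elim conjE)
  fix w \<alpha> \<beta> p q m
  assume def: "run A w (chi0 A) \<noteq> None" and pq: "p \<noteq> q"
    and pre: "\<forall>r. prefix (proj w (Sig_of r)) (proj (split (\<alpha> @ \<beta>)) (Sig_of r))"
    and pjq: "proj w (Sig_of q) = proj (split \<alpha>) (Sig_of q)"
    and defW: "run A (w @ [Rcv p q m]) (chi0 A) \<noteq> None"
  define n where "n x = min (count_list (split \<alpha>) x) (count_list w x)" for x
  define w' where "w' = rmvE n w"
  have nx: "n x = min (count_list (proj (split \<alpha>) (Sig_of r)) x) (count_list (proj w (Sig_of r)) x)"
    if "x \<in> Sig_of r" for x r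
    using that by (simp add: n_def count_proj)
  have comp: "compliant w' \<beta>"
    unfolding compliant_def
  proof
    fix r
    have "proj w' (Sig_of r) = rmvE n (proj w (Sig_of r))" by (simp add: w'_def proj_rmvE)
    moreover have "prefix (rmvE n (proj w (Sig_of r))) (proj (split \<beta>) (Sig_of r))"
    proof (rule prefix_rmvE)
      show "prefix (proj w (Sig_of r)) (proj (split \<alpha>) (Sig_of r) @ proj (split \<beta>) (Sig_of r))"
        using pre by simp
      show "\<forall>x\<in>set (proj w (Sig_of r)). n x = min (count_list (proj (split \<alpha>) (Sig_of r)) x) (count_list (proj w (Sig_of r)) x)"
        using nx by (auto simp: proj_def)
    qed
    ultimately show "prefix (proj w' (Sig_of r)) (proj (split \<beta>) (Sig_of r))" by simp
  qed
  have qe: "proj w' (Sig_of q) = []"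
  proof -
    have "proj w' (Sig_of q) = rmvE n (proj w (Sig_of q))" by (simp add: w'_def proj_rmvE)
    also have "\<dots> = []"
    proof (rule rmvE_all, intro ballI)
      fix x assume "x \<in> set (proj w (Sig_of q))"
      then have "x \<in> Sig_of q" by (simp add: proj_def)
      then show "count_list (proj w (Sig_of q)) x \<le> n x" using nx[of x q] pjq by simp
    qed
    finally show ?thesis .
  qed
  define W where "W = w @ [Rcv p q m]"
  have wW: "rmvE n W = w' @ [Rcv p q m]"
  proof -
    have "rmvE n W = w' @ rmvE (\<lambda>x. n x - count_list w x) [Rcv p q m]"
      by (simp add: W_def w'_def rmvE_append)
    moreover have "n x - count_list w x = 0" for x by (simp add: n_def)
    ultimately show ?thesis by simp
  qed
  have kq: "count_list w (Rcv p q m) = count_list (split \<alpha>) (Rcv p q m)"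
  proof -
    have "count_list w (Rcv p q m) = count_list (proj w (Sig_of q)) (Rcv p q m)" by (simp add: count_proj)
    also have "\<dots> = count_list (split \<alpha>) (Rcv p q m)" using pjq by (simp add: count_proj)
    finally show ?thesis .
  qed
  have defW': "run A W (chi0 A) \<noteq> None" using defW by (simp add: W_def)
  have "run A (rmvE n W) (chi0 A) \<noteq> None"
  proof (rule KEY[OF BA defW'], intro allI)
    fix p' q' m'
    have ec: "count_list w (Rcv p' q' m') \<le> count_list w (Snd p' q' m')" using EC[OF BA def] .
    have ecW: "count_list W (Rcv p' q' m') \<le> count_list W (Snd p' q' m')" using EC[OF BA defW'] .
    have cS: "count_list W (Snd p' q' m') = count_list w (Snd p' q' m')" by (simp add: W_def)
    have cR: "count_list W (Rcv p' q' m') = count_list w (Rcv p' q' m') + (if (p',q',m') = (p,q,m) then 1 else 0)"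
      by (auto simp: W_def)
    have ks: "count_list (split \<alpha>) (Snd p' q' m') = count_list (split \<alpha>) (Rcv p' q' m')" by (rule count_split)
    show "n (Rcv p' q' m') \<le> count_list W (Rcv p' q' m') \<and> n (Rcv p' q' m') \<le> n (Snd p' q' m') \<and>
       (n (Rcv p' q' m') < count_list W (Rcv p' q' m') \<longrightarrow> n (Snd p' q' m') = n (Rcv p' q' m'))"
    proof (cases "(p',q',m') = (p,q,m)")
      case True
      then show ?thesis using ec ecW cS cR ks kq unfolding n_def by auto
    next
      case False
      then show ?thesis using ec ecW cS cR ks unfolding n_def by auto
    qed
  qed
  then have "run A (w' @ [Rcv p q m]) (chi0 A) \<noteq> None" using wW by simp
  then show "\<exists>w'. compliant w' \<beta> \<and> proj w' (Sig_of q) = [] \<and> run A (w' @ [Rcv p q m]) (chi0 A) \<noteq> None"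
    using comp qe by blast
qed

theorem lemma6p2:
  fixes A :: "('p,'v,'c,'b) arch"
  assumes "buffer_axioms A"
  shows "CC1 A \<and> CC2 A \<and> CC3 A \<and> CC4 A \<and> CC5 A \<and> CC6 A"
  using assms CC1_ok CC2_ok CC3_ok CC4_ok CC5_ok CC6_ok by blast

end
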